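(* Let $n\ge1$ be odd and $m\ge 2$ be even. Then every $\mathbf{v}\in\mathbb{Z}_m^n$ that has a predecessor has exactly two predecessors. Moreover, if $(x_1,\dots,x_n)$ is one predecessor of $\mathbf{v}$, then the other is $(\tfrac m2+x_1,\tfrac m2+x_2,\dots,\tfrac m2+x_n)$ (entries mod $m$).
   Context: The Ducci function $D:\mathbb{Z}_m^n\to\mathbb{Z}_m^n$ is $D(x_1,\dots,x_n)=(x_1+x_2,\,x_2+x_3,\,\dots,\,x_{n-1}+x_n,\,x_n+x_1)$, entries mod $m$. A predecessor of $\mathbf{v}$ is any $\mathbf{w}\in\mathbb{Z}_m^n$ with $D(\mathbf{w})=\mathbf{v}$. *)

theory Defs
  imports Main
begin

definition Zmn :: "int \<Rightarrow> nat \<Rightarrow> int list set" where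
  "Zmn m n = {xs. length xs = n \<and> (\<forall>x\<in>set xs. 0 \<le> x \<and> x < m)}"

definition ducci :: "int \<Rightarrow> int list \<Rightarrow> int list" where
  "ducci m xs = map (\<lambda>i. (xs ! i + xs ! ((i + 1) mod length xs)) mod m) [0..<length xs]"

definition predecessors :: "int \<Rightarrow> nat \<Rightarrow> int list \<Rightarrow> int list set" where
  "predecessors m n v = {w \<in> Zmn m n. ducci m w = v}"

end

theory Submission
  imports Defs
begin

lemma ducci_nth:
  assumes "i < length xs"
  shows "ducci m xs ! i = (xs ! i + xs ! ((i + 1) mod length xs)) mod m"
  using assms by (simp add: ducci_def)

lemma shift_pred:
  fixes m :: int
  assumes "even m" "m \<ge> 2" "w \<in> Zmn m n"
  shows "map (\<lambda>x. (m div 2 + x) mod m) w \<in> Zmn m n"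
    and "ducci m (map (\<lambda>x. (m div 2 + x) mod m) w) = ducci m w"
proof -
  show "map (\<lambda>x. (m div 2 + x) mod m) w \<in> Zmn m n"
    using assms by (auto simp: Zmn_def)
  obtain k where k: "m = 2 * k" using assms(1) by auto
  have len: "length w = n" using assms(3) by (simp add: Zmn_def)
  show "ducci m (map (\<lambda>x. (m div 2 + x) mod m) w) = ducci m w"
  proof (rule nth_equalityI)
    show "length (ducci m (map (\<lambda>x. (m div 2 + x) mod m) w)) = length (ducci m w)"
      by (simp add: ducci_def)
  next
    fix i assume "i < length (ducci m (map (\<lambda>x. (m div 2 + x) mod m) w))"
    hence i: "i < length w" by (simp add: ducci_def)
    have j: "(i + 1) mod length w < length w" using i by (intro mod_less_divisor) auto
    have "((k + w ! i) mod m + (k + w ! ((i + 1) mod length w)) mod m) mod m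
        = ((k + w ! i) + (k + w ! ((i + 1) mod length w))) mod m"
      by (simp add: mod_add_eq)
    also have "\<dots> = (m + (w ! i + w ! ((i + 1) mod length w))) mod m"
      using k by (simp add: algebra_simps)
    also have "\<dots> = (w ! i + w ! ((i + 1) mod length w)) mod m" by simp
    finally show "ducci m (map (\<lambda>x. (m div 2 + x) mod m) w) ! i = ducci m w ! i"
      using i j k by (simp add: ducci_nth)
  qed
qed

lemma two_preds:
  fixes m :: int
  assumes "even m" "m \<ge> 2" "odd n" "w \<in> Zmn m n" "u \<in> Zmn m n"
    and eq: "ducci m u = ducci m w"
  shows "u = w \<or> u = map (\<lambda>x. (m div 2 + x) mod m) w"
proof -
  obtain k where k: "m = 2 * k" using assms(1) by auto
  have kpos: "k > 0" using k assms(2) by simp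
  have lw: "length w = n" and lu: "length u = n" using assms(4,5) by (auto simp: Zmn_def)
  have rw: "\<And>i. i < n \<Longrightarrow> 0 \<le> w ! i \<and> w ! i < m"
    using assms(4) lw by (auto simp: Zmn_def)
  have ru: "\<And>i. i < n \<Longrightarrow> 0 \<le> u ! i \<and> u ! i < m"
    using assms(5) lu by (auto simp: Zmn_def)
  define d where "d i = u ! i - w ! i" for i
  have step: "m dvd (d i + d ((i + 1) mod n))" if "i < n" for i
  proof -
    have "ducci m u ! i = ducci m w ! i" using eq by simp
    hence "(u ! i + u ! ((i + 1) mod n)) mod m = (w ! i + w ! ((i + 1) mod n)) mod m"
      using that lu lw by (simp add: ducci_nth)
    hence "m dvd ((u ! i + u ! ((i + 1) mod n)) - (w ! i + w ! ((i + 1) mod n)))"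
      by (simp add: mod_eq_dvd_iff)
    thus ?thesis by (simp add: d_def algebra_simps)
  qed
  have alt: "i < n \<longrightarrow> m dvd (d i - (-1) ^ i * d 0)" for i
  proof (induction i)
    case 0 then show ?case by simp
  next
    case (Suc i)
    show ?case
    proof
      assume si: "Suc i < n"
      hence "(i + 1) mod n = Suc i" by simp
      hence h1: "m dvd (d i + d (Suc i))" using step[of i] si by simp
      have h2: "m dvd (d i - (-1) ^ i * d 0)" using Suc si by simp
      have "d (Suc i) - (-1) ^ Suc i * d 0 = (d i + d (Suc i)) - (d i - (-1) ^ i * d 0)"
        by simp
      thus "m dvd (d (Suc i) - (-1) ^ Suc i * d 0)" using h1 h2 by (metis dvd_diff)
    qed
  qed
  have n1: "n \<ge> 1" using assms(3) by (cases n) auto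
  have ev: "even (n - 1)" using assms(3) n1 by simp
  have a1: "m dvd (d (n - 1) - d 0)" using alt[of "n - 1"] n1 ev by simp
  have "(n - 1 + 1) mod n = 0" using n1 by simp
  hence a2: "m dvd (d (n - 1) + d 0)" using step[of "n - 1"] n1 by simp
  have "m dvd ((d (n - 1) + d 0) - (d (n - 1) - d 0))" using a1 a2 by (metis dvd_diff)
  hence "2 * k dvd 2 * d 0" using k by simp
  hence kd: "k dvd d 0" by simp
  then obtain c where c: "d 0 = k * c" by auto
  show ?thesis
  proof (cases "even c")
    case True
    then obtain c' where "c = 2 * c'" by auto
    hence md0: "m dvd d 0" using c k by simp
    have "u = w"
    proof (rule nth_equalityI)
      show "length u = length w" using lu lw by simp
    next
      fix i assume "i < length u"
      hence i: "i < n" using lu by simp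
      have "m dvd d i - (-1) ^ i * d 0" using alt i by simp
      moreover have "m dvd (-1) ^ i * d 0" using md0 by simp
      ultimately have "m dvd d i" by (metis dvd_add add.commute diff_add_cancel)
      then obtain e where e: "d i = m * e" by auto
      have "- m < d i" "d i < m" using rw[OF i] ru[OF i] d_def by auto
      hence "e = 0" using e assms(2)
      proof -
        have m0: "0 < m" using assms(2) by simp
        have "m * e < m * 1" using \<open>d i < m\<close> e by simp
        hence "e < 1" using mult_less_cancel_left_pos[OF m0] by blast
        have "m * (-1) < m * e" using \<open>- m < d i\<close> e by simp
        hence "-1 < e" using mult_less_cancel_left_pos[OF m0] by blast
        note \<open>e < 1\<close> this
        thus "e = 0" by simp
      qed
      thus "u ! i = w ! i" using e d_def by simp
    qed
    thus ?thesis by simp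
  next
    case False
    then obtain c' where cc: "c = 2 * c' + 1" using oddE by blast
    have md0: "m dvd d 0 - k" using c cc k by (simp add: algebra_simps)
    have "u = map (\<lambda>x. (m div 2 + x) mod m) w"
    proof (rule nth_equalityI)
      show "length u = length (map (\<lambda>x. (m div 2 + x) mod m) w)" using lu lw by simp
    next
      fix i assume "i < length u"
      hence i: "i < n" using lu by simp
      have h: "m dvd d i - (-1) ^ i * d 0" using alt i by simp
      have "m dvd d i - k"
      proof (cases "even i")
        case True
        then have "m dvd d i - d 0" using h by simp
        moreover have "d i - k = (d i - d 0) + (d 0 - k)" by simp
        ultimately show ?thesis using md0 by (metis dvd_add)
      next
        case False
        then have "m dvd d i + d 0" using h by simp
        hence "m dvd (d i + d 0) - (d 0 - k) - m" using md0 by (metis dvd_diff dvd_refl)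
        moreover have "(d i + d 0) - (d 0 - k) - m = d i - k" using k by simp
        ultimately show ?thesis by metis
      qed
      hence "m dvd u ! i - (k + w ! i)" using d_def by (simp add: algebra_simps)
      hence "u ! i mod m = (k + w ! i) mod m" by (simp add: mod_eq_dvd_iff)
      moreover have "u ! i mod m = u ! i" using ru[OF i] by simp
      ultimately show "u ! i = map (\<lambda>x. (m div 2 + x) mod m) w ! i"
        using i lw k by simp
    qed
    thus ?thesis by simp
  qed
qed

theorem theorem2p1:
  fixes n :: nat and m :: int and v w :: "int list"
  assumes "n \<ge> 1" and "odd n" and "m \<ge> 2" and "even m"
    and "v \<in> Zmn m n" and "w \<in> predecessors m n v"
  shows "card (predecessors m n v) = 2
    \<and> predecessors m n v = {w, map (\<lambda>x. (m div 2 + x) mod m) w}"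
proof -
  have wZ: "w \<in> Zmn m n" and dw: "ducci m w = v" using assms(6) by (auto simp: predecessors_def)
  note s = shift_pred[OF assms(4) assms(3) wZ]
  have set: "predecessors m n v = {w, map (\<lambda>x. (m div 2 + x) mod m) w}"
  proof
    show "predecessors m n v \<subseteq> {w, map (\<lambda>x. (m div 2 + x) mod m) w}"
      using two_preds[OF assms(4) assms(3) assms(2) wZ] dw
      by (auto simp: predecessors_def)
    show "{w, map (\<lambda>x. (m div 2 + x) mod m) w} \<subseteq> predecessors m n v"
      using s wZ dw by (auto simp: predecessors_def)
  qed
  obtain k where k: "m = 2 * k" using assms(4) by auto
  have lw: "length w = n" using wZ by (simp add: Zmn_def)
  have r0: "0 \<le> w ! 0 \<and> w ! 0 < m" using wZ lw assms(1) by (auto simp: Zmn_def)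
  have "w ! 0 \<noteq> (k + w ! 0) mod m"
  proof
    assume "w ! 0 = (k + w ! 0) mod m"
    hence "(k + w ! 0) mod m = w ! 0 mod m" using r0 by simp
    hence "m dvd k" by (simp add: mod_eq_dvd_iff)
    moreover have "k > 0" using k assms(3) by simp
    ultimately have "m \<le> k" by (simp add: zdvd_imp_le)
    thus False using k assms(3) by simp
  qed
  moreover have "map (\<lambda>x. (m div 2 + x) mod m) w ! 0 = (k + w ! 0) mod m"
    using lw assms(1) k by simp
  ultimately have "w \<noteq> map (\<lambda>x. (m div 2 + x) mod m) w" by metis
  thus ?thesis using set by simp
qed

end
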